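(* Let $G$ be a graph, let $F(G)$ be the union of all tree components of $G$ and $cmp(F(G))$ the number of tree components of $G$, and let $k\ge1$. The following are equivalent: (a1) $M_k(G)$ has at least one circuit; (a2) $k\le \Delta G+cmp(F(G))$; (a3) $M_k(G)$ is a non-trivial matroid.
   Context: Graphs are finite, may have loops and parallel edges, and have no isolated vertices. $\Delta G=|E(G)|-|V(G)|$. For $X\subseteq E(G)$, $G\langle X\rangle$ is the subgraph with edge set $X$ and vertex set the vertices incident to $X$. For $k\ge0$, the $k$-circular matroid $M_k(G)$ is the matroid on $E(G)$ whose circuits are the inclusion-minimal members of $\{C\subseteq E(G):C\neq\emptyset,\ |C|=|V(G\langle C\rangle)|+k\}$. A matroid on $E$ is trivial if $E$ is a base or $E$ is a cobase (i.e. $E\setminus\emptyset$ complement of a base is $E$), and non-trivial otherwise; equivalently, non-trivial means it has at least one circuit and at least one cocircuit. *)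

theory Defs
  imports Main
begin

text \<open>A graph (loops and parallel edges allowed, no isolated vertices) is given by a
finite edge set E and an incidence map inc assigning to each edge its set of
one (loop) or two end-vertices. The vertex set is the set of vertices incident to edges.\<close>

definition graph :: "'e set \<Rightarrow> ('e \<Rightarrow> 'v set) \<Rightarrow> bool" where
  "graph E inc \<longleftrightarrow> finite E \<and> (\<forall>e\<in>E. card (inc e) = 1 \<or> card (inc e) = 2)"

definition verts :: "('e \<Rightarrow> 'v set) \<Rightarrow> 'e set \<Rightarrow> 'v set" where
  "verts inc X = \<Union> (inc ` X)"

definition adj :: "('e \<Rightarrow> 'v set) \<Rightarrow> 'e set \<Rightarrow> ('v \<times> 'v) set" where
  "adj inc X = {(u, w). \<exists>e\<in>X. u \<in> inc e \<and> w \<in> inc e}"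

definition connected_edges :: "('e \<Rightarrow> 'v set) \<Rightarrow> 'e set \<Rightarrow> bool" where
  "connected_edges inc X \<longleftrightarrow> X \<noteq> {} \<and>
     (\<forall>u\<in>verts inc X. \<forall>w\<in>verts inc X. (u, w) \<in> (adj inc X)\<^sup>*)"

definition deg :: "('e \<Rightarrow> 'v set) \<Rightarrow> 'e set \<Rightarrow> 'v \<Rightarrow> nat" where
  "deg inc X v = (\<Sum>e\<in>{e\<in>X. v \<in> inc e}. if card (inc e) = 1 then 2 else 1)"

definition is_cycle :: "('e \<Rightarrow> 'v set) \<Rightarrow> 'e set \<Rightarrow> bool" where
  "is_cycle inc X \<longleftrightarrow> connected_edges inc X \<and> (\<forall>v\<in>verts inc X. deg inc X v = 2)"

text \<open>Components of G, given by their edge sets (G has no isolated vertices).\<close>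
definition components :: "'e set \<Rightarrow> ('e \<Rightarrow> 'v set) \<Rightarrow> 'e set set" where
  "components E inc =
     (\<lambda>v. {e\<in>E. inc e \<subseteq> (adj inc E)\<^sup>* `` {v}}) ` verts inc E"

definition is_tree :: "('e \<Rightarrow> 'v set) \<Rightarrow> 'e set \<Rightarrow> bool" where
  "is_tree inc X \<longleftrightarrow> connected_edges inc X \<and> (\<nexists>Y. Y \<subseteq> X \<and> is_cycle inc Y)"

definition tree_components :: "'e set \<Rightarrow> ('e \<Rightarrow> 'v set) \<Rightarrow> 'e set set" where
  "tree_components E inc = {X \<in> components E inc. is_tree inc X}"

definition Delta :: "'e set \<Rightarrow> ('e \<Rightarrow> 'v set) \<Rightarrow> int" where
  "Delta E inc = int (card E) - int (card (verts inc E))"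

definition kc_family :: "nat \<Rightarrow> 'e set \<Rightarrow> ('e \<Rightarrow> 'v set) \<Rightarrow> 'e set set" where
  "kc_family k E inc = {C. C \<subseteq> E \<and> C \<noteq> {} \<and> card C = card (verts inc C) + k}"

definition kc_circuit :: "nat \<Rightarrow> 'e set \<Rightarrow> ('e \<Rightarrow> 'v set) \<Rightarrow> 'e set \<Rightarrow> bool" where
  "kc_circuit k E inc C \<longleftrightarrow> C \<in> kc_family k E inc \<and>
     (\<forall>D \<in> kc_family k E inc. D \<subseteq> C \<longrightarrow> D = C)"

definition kc_indep :: "nat \<Rightarrow> 'e set \<Rightarrow> ('e \<Rightarrow> 'v set) \<Rightarrow> 'e set \<Rightarrow> bool" where
  "kc_indep k E inc I \<longleftrightarrow> I \<subseteq> E \<and> (\<nexists>C. kc_circuit k E inc C \<and> C \<subseteq> I)"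

definition kc_base :: "nat \<Rightarrow> 'e set \<Rightarrow> ('e \<Rightarrow> 'v set) \<Rightarrow> 'e set \<Rightarrow> bool" where
  "kc_base k E inc B \<longleftrightarrow> kc_indep k E inc B \<and>
     (\<forall>I. kc_indep k E inc I \<longrightarrow> B \<subseteq> I \<longrightarrow> I = B)"

definition kc_cobase :: "nat \<Rightarrow> 'e set \<Rightarrow> ('e \<Rightarrow> 'v set) \<Rightarrow> 'e set \<Rightarrow> bool" where
  "kc_cobase k E inc X \<longleftrightarrow> (\<exists>B. kc_base k E inc B \<and> X = E - B)"

definition kc_trivial :: "nat \<Rightarrow> 'e set \<Rightarrow> ('e \<Rightarrow> 'v set) \<Rightarrow> bool" where
  "kc_trivial k E inc \<longleftrightarrow> kc_base k E inc E \<or> kc_cobase k E inc E"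

end

theory Submission
  imports Defs
begin


definition fv :: "('e \<Rightarrow> 'v set) \<Rightarrow> 'e set \<Rightarrow> int" where
  "fv inc C = int (card C) - int (card (verts inc C))"

lemma graph_sub: "graph E inc \<Longrightarrow> C \<subseteq> E \<Longrightarrow> graph C inc"
  unfolding graph_def by (auto intro: finite_subset)

lemma graph_inc: assumes "graph E inc" "e \<in> E"
  shows "finite (inc e)" "inc e \<noteq> {}" "card (inc e) \<le> 2" "card (inc e) \<ge> 1"
proof -
  have c: "card (inc e) = 1 \<or> card (inc e) = 2" using assms unfolding graph_def by blast
  then show "finite (inc e)" by (metis card.infinite zero_neq_numeral zero_neq_one)
  show "inc e \<noteq> {}" using c by auto
  show "card (inc e) \<le> 2" "card (inc e) \<ge> 1" using c by auto
qed

lemma graph_fin: "graph E inc \<Longrightarrow> finite E" unfolding graph_def by auto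

lemma verts_simps[simp]: "verts inc {} = {}" "verts inc (insert e A) = inc e \<union> verts inc A"
  "verts inc (A \<union> B) = verts inc A \<union> verts inc B"
  by (auto simp: verts_def)

lemma verts_mono: "A \<subseteq> B \<Longrightarrow> verts inc A \<subseteq> verts inc B"
  by (auto simp: verts_def)

lemma verts_finite: "graph E inc \<Longrightarrow> finite (verts inc E)"
  unfolding verts_def by (metis finite_UN_I graph_fin graph_inc(1))

lemma fv_del: assumes g: "graph C inc" and e: "e \<in> C"
  shows "fv inc (C - {e}) \<ge> fv inc C - 1"
proof -
  have "card (verts inc (C - {e})) \<le> card (verts inc C)"
    by (rule card_mono[OF verts_finite[OF g] verts_mono]) auto
  moreover have "card (C - {e}) = card C - 1" using e by simp
  moreover have "card C \<ge> 1" using e graph_fin[OF g] card_gt_0_iff[of C] by fastforce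
  ultimately show ?thesis unfolding fv_def by linarith
qed

lemma exists_exact:
  assumes "graph C inc" "int k \<le> fv inc C" "k \<ge> 1"
  shows "\<exists>D\<subseteq>C. D \<noteq> {} \<and> fv inc D = int k"
  using assms
proof (induction "card C" arbitrary: C rule: less_induct)
  case less
  show ?case
  proof (cases "fv inc C = int k")
    case True
    then have "C \<noteq> {}" using less(4) by (auto simp: fv_def)
    then show ?thesis using True by blast
  next
    case False
    then have gt: "fv inc C > int k" using less(3) by auto
    then have "C \<noteq> {}" using less(4) by (auto simp: fv_def)
    then obtain e where e: "e \<in> C" by blast
    have g': "graph (C - {e}) inc" using graph_sub[OF less(2)] by blast
    have "fv inc (C - {e}) \<ge> int k" using fv_del[OF less(2) e] gt by linarith
    moreover have "card (C - {e}) < card C" using card_Diff1_less[OF graph_fin[OF less(2)] e] .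
    ultimately have "\<exists>D\<subseteq>C - {e}. D \<noteq> {} \<and> fv inc D = int k"
      using less(1)[of "C - {e}"] g' less(4) by blast
    then obtain D where "D \<subseteq> C - {e}" "D \<noteq> {}" "fv inc D = int k" by blast
    then show ?thesis by blast
  qed
qed

lemma handshake:
  assumes g: "graph Y inc"
  shows "(\<Sum>v\<in>verts inc Y. deg inc Y v) = 2 * card Y"
proof -
  have "(\<Sum>v\<in>verts inc Y. deg inc Y v) = (\<Sum>v\<in>verts inc Y. \<Sum>e\<in>{e. e \<in> Y \<and> v \<in> inc e}. (if card (inc e) = 1 then 2 else 1::nat))"
    by (simp add: deg_def)
  also have "\<dots> = (\<Sum>e\<in>Y. \<Sum>v\<in>{v. v \<in> verts inc Y \<and> v \<in> inc e}. (if card (inc e) = 1 then 2 else 1::nat))"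
    by (rule sum.swap_restrict[OF verts_finite[OF g] graph_fin[OF g]])
  also have "\<dots> = (\<Sum>e\<in>Y. 2)"
  proof (rule sum.cong[OF refl])
    fix e assume e: "e \<in> Y"
    then have "{v. v \<in> verts inc Y \<and> v \<in> inc e} = inc e" by (auto simp: verts_def)
    moreover have "card (inc e) = 1 \<or> card (inc e) = 2" using g e by (auto simp: graph_def)
    ultimately show "(\<Sum>v\<in>{v. v \<in> verts inc Y \<and> v \<in> inc e}. (if card (inc e) = 1 then 2 else 1::nat)) = 2"
      by auto
  qed
  finally show ?thesis by simp
qed

lemma cycle_fv:
  assumes g: "graph Y inc" and c: "is_cycle inc Y"
  shows "fv inc Y = 0"
proof -
  have "(\<Sum>v\<in>verts inc Y. deg inc Y v) = (\<Sum>v\<in>verts inc Y. 2)"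
    using c by (auto simp: is_cycle_def)
  then have "2 * card Y = 2 * card (verts inc Y)" using handshake[OF g] by simp
  then show ?thesis by (simp add: fv_def)
qed



lemma adj_edge: "e \<in> X \<Longrightarrow> x \<in> inc e \<Longrightarrow> y \<in> inc e \<Longrightarrow> (x,y) \<in> adj inc X"
  by (auto simp: adj_def)

lemma adj_conv: "(adj inc X)\<inverse> = adj inc X"
  by (auto simp: adj_def)

lemma adj_rtrancl_sym: "(x,y) \<in> (adj inc X)\<^sup>* \<Longrightarrow> (y,x) \<in> (adj inc X)\<^sup>*"
  by (metis adj_conv rtrancl_converseI)

lemma exists_touching:
  assumes g: "graph X inc" and conn: "connected_edges inc X" and CX: "C \<subseteq> X" "C \<noteq> {}"
    and ne: "X - C \<noteq> {}"
  shows "\<exists>e\<in>X - C. inc e \<inter> verts inc C \<noteq> {}"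
proof (rule ccontr)
  assume "\<not> ?thesis"
  then have dis: "\<And>e. e \<in> X - C \<Longrightarrow> inc e \<inter> verts inc C = {}" by blast
  obtain e0 where e0: "e0 \<in> X - C" using ne by blast
  obtain w where w: "w \<in> inc e0" using graph_inc(2)[OF g, of e0] e0 by blast
  obtain c where c: "c \<in> C" using CX by blast
  obtain u where u: "u \<in> inc c" using graph_inc(2)[OF g, of c] c CX by blast
  have uC: "u \<in> verts inc C" using u c by (auto simp: verts_def)
  have "u \<in> verts inc X" "w \<in> verts inc X" using u c w e0 CX by (auto simp: verts_def)
  then have "(u, w) \<in> (adj inc X)\<^sup>*" using conn by (auto simp: connected_edges_def)
  then have "w \<in> verts inc C"
  proof (induction rule: rtrancl_induct)
    case base
    then show ?case using uC .
  next
    case (step y z)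
    then obtain e where e: "e \<in> X" "y \<in> inc e" "z \<in> inc e" by (auto simp: adj_def)
    show ?case
    proof (cases "e \<in> C")
      case True
      then show ?thesis using e by (auto simp: verts_def)
    next
      case False
      then have "inc e \<inter> verts inc C = {}" using dis e by blast
      then show ?thesis using e step.IH by blast
    qed
  qed
  then show False using dis[OF e0] w by blast
qed

lemma grow:
  assumes g: "graph X inc" and conn: "connected_edges inc X" and CX: "C \<subseteq> X" "C \<noteq> {}"
  shows "card (verts inc X) + card C \<le> card (verts inc C) + card X"
  using CX
proof (induction "card (X - C)" arbitrary: C rule: less_induct)
  case less
  have finX: "finite X" using graph_fin[OF g] .
  show ?case
  proof (cases "X - C = {}")
    case True
    then have "C = X" using less(2) by blast
    then show ?thesis by simp
  next
    case False
    obtain e where e: "e \<in> X - C" "inc e \<inter> verts inc C \<noteq> {}"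
      using exists_touching[OF g conn less(2) less(3) False] by blast
    define C' where "C' = insert e C"
    have lt: "card (X - C') < card (X - C)" unfolding C'_def using e finX
      by (metis Diff_insert card_Diff1_less finite_Diff)
    have IH: "card (verts inc X) + card C' \<le> card (verts inc C') + card X"
      using less(1)[OF lt] less(2) e(1) unfolding C'_def by blast
    have finC: "finite C" using finX less(2) finite_subset by blast
    have cC': "card C' = card C + 1" unfolding C'_def using e(1) finC by simp
    have fvC: "finite (verts inc C)" using verts_finite[OF graph_sub[OF g less(2)]] .
    have fi: "finite (inc e)" "card (inc e) \<le> 2" using graph_inc[OF g, of e] e(1) by auto
    have "inc e - verts inc C \<subset> inc e" using e(2) by blast
    then have "card (inc e - verts inc C) < card (inc e)" using fi(1) by (rule psubset_card_mono[rotated])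
    then have d1: "card (inc e - verts inc C) \<le> 1" using fi(2) by linarith
    have "verts inc C' = (inc e - verts inc C) \<union> verts inc C" unfolding C'_def by auto
    then have "card (verts inc C') \<le> card (inc e - verts inc C) + card (verts inc C)"
      using card_Un_le[of "inc e - verts inc C" "verts inc C"] by simp
    then have "card (verts inc C') \<le> card (verts inc C) + 1" using d1 by linarith
    then show ?thesis using IH cC' by linarith
  qed
qed



lemma sum_all2:
  fixes d :: "'a \<Rightarrow> nat"
  assumes "finite V" "(\<Sum>v\<in>V. d v) = 2 * card V" "\<And>v. v \<in> V \<Longrightarrow> d v \<ge> 2" "v \<in> V"
  shows "d v = 2"
proof (rule ccontr)
  assume "d v \<noteq> 2"
  then have v: "v \<in> V" "d v \<noteq> 2" using assms(4) by auto
  then have "d v > 2" using assms(3) by fastforce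
  then have "(\<Sum>v\<in>V. (2::nat)) < (\<Sum>v\<in>V. d v)"
    using sum_strict_mono_ex1[OF assms(1), of "\<lambda>_. 2" d] assms(3) v by blast
  then show False using assms(2) by simp
qed

lemma cycle_exists:
  assumes g: "graph Y inc" and ne: "Y \<noteq> {}" and f: "fv inc Y \<ge> 0"
  shows "\<exists>Z\<subseteq>Y. is_cycle inc Z"
proof -
  let ?P = "\<lambda>Z. Z \<subseteq> Y \<and> Z \<noteq> {} \<and> fv inc Z \<ge> 0"
  obtain Z where PZ: "?P Z" and minZ: "\<And>W. ?P W \<Longrightarrow> card Z \<le> card W"
    using ex_has_least_nat[of ?P Y card] assms by blast
  have gZ: "graph Z inc" using graph_sub[OF g] PZ by blast
  have finZ: "finite Z" using graph_fin[OF gZ] .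
  have minZ': "W = Z" if "W \<subseteq> Z" "W \<noteq> {}" "fv inc W \<ge> 0" for W
  proof -
    have "card Z \<le> card W" using minZ that PZ by blast
    then show "W = Z" using card_seteq[OF finZ that(1)] by blast
  qed
  have fVZ: "finite (verts inc Z)" using verts_finite[OF gZ] .
  have f0: "fv inc Z = 0"
  proof (rule ccontr)
    assume "fv inc Z \<noteq> 0"
    then have f1: "fv inc Z \<ge> 1" using PZ by linarith
    obtain e where e: "e \<in> Z" using PZ by blast
    show False
    proof (cases "Z = {e}")
      case True
      then have "fv inc Z = 1 - int (card (inc e))" by (simp add: fv_def)
      moreover have "card (inc e) \<ge> 1" using graph_inc(4)[OF gZ e] .
      ultimately show False using f1 by linarith
    next
      case False
      then have "Z - {e} \<noteq> {}" using e by blast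
      moreover have "fv inc (Z - {e}) \<ge> 0" using fv_del[OF gZ e] f1 by linarith
      ultimately have "Z - {e} = Z" using minZ'[of "Z - {e}"] by blast
      then show False using e by blast
    qed
  qed
  have dge: "deg inc Z v \<ge> 2" if v: "v \<in> verts inc Z" for v
  proof (rule ccontr)
    assume lt: "\<not> deg inc Z v \<ge> 2"
    define S where "S = {e\<in>Z. v \<in> inc e}"
    have finS: "finite S" unfolding S_def using finZ by simp
    have Sne: "S \<noteq> {}" using v unfolding S_def verts_def by blast
    have "card S = (\<Sum>e\<in>S. 1::nat)" by simp
    also have "\<dots> \<le> (\<Sum>e\<in>S. if card (inc e) = 1 then 2 else 1)"
      by (rule sum_mono) auto
    also have "\<dots> = deg inc Z v" unfolding deg_def S_def by simp
    finally have "card S \<le> 1" using lt by linarith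
    moreover have "card S \<noteq> 0" using finS Sne by simp
    ultimately have "card S = 1" by linarith
    then obtain e where Se: "S = {e}" by (metis card_1_singletonE)
    then have eZ: "e \<in> Z" "v \<in> inc e" unfolding S_def by auto
    have "deg inc Z v = (if card (inc e) = 1 then 2 else 1)"
      unfolding deg_def using Se unfolding S_def by simp
    then have c2: "card (inc e) \<noteq> 1" using lt by auto
    have sub: "verts inc (Z - {e}) \<subseteq> verts inc Z - {v}"
    proof
      fix x assume "x \<in> verts inc (Z - {e})"
      then obtain e' where e': "e' \<in> Z" "e' \<noteq> e" "x \<in> inc e'" by (auto simp: verts_def)
      have "v \<notin> inc e'" using e' Se unfolding S_def by blast
      then have "x \<noteq> v" using e' by blast
      then show "x \<in> verts inc Z - {v}" using e' by (auto simp: verts_def)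
    qed
    have "card (verts inc (Z - {e})) \<le> card (verts inc Z - {v})"
      by (rule card_mono[OF _ sub]) (simp add: fVZ)
    also have "\<dots> = card (verts inc Z) - 1" using v fVZ by simp
    finally have cv: "card (verts inc (Z - {e})) \<le> card (verts inc Z) - 1" .
    have cvpos: "card (verts inc Z) \<ge> 1" using v fVZ card_gt_0_iff[of "verts inc Z"] by fastforce
    have ce: "card (Z - {e}) = card Z - 1" using eZ by simp
    have czpos: "card Z \<ge> 1" using eZ finZ card_gt_0_iff[of Z] by fastforce
    have fd: "fv inc (Z - {e}) \<ge> 0" using cv ce cvpos czpos f0 unfolding fv_def by linarith
    have "Z \<noteq> {e}"
    proof
      assume "Z = {e}"
      then have "fv inc Z = 1 - int (card (inc e))" by (simp add: fv_def)
      moreover have "card (inc e) = 2" using c2 gZ eZ by (auto simp: graph_def)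
      ultimately show False using f0 by simp
    qed
    then have "Z - {e} \<noteq> {}" using eZ by blast
    then have "Z - {e} = Z" using minZ'[of "Z - {e}"] fd by blast
    then show False using eZ by blast
  qed
  have hs: "(\<Sum>v\<in>verts inc Z. deg inc Z v) = 2 * card (verts inc Z)"
    using handshake[OF gZ] f0 unfolding fv_def by simp
  have deq: "deg inc Z v = 2" if "v \<in> verts inc Z" for v
    by (rule sum_all2[OF fVZ hs dge that])
  have conn: "\<forall>u\<in>verts inc Z. \<forall>w\<in>verts inc Z. (u, w) \<in> (adj inc Z)\<^sup>*"
  proof (rule ccontr)
    assume "\<not> ?thesis"
    then obtain u w where uw: "u \<in> verts inc Z" "w \<in> verts inc Z" "(u, w) \<notin> (adj inc Z)\<^sup>*" by blast
    define R where "R = (adj inc Z)\<^sup>* `` {u}"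
    define Z1 where "Z1 = {e\<in>Z. inc e \<subseteq> R}"
    define Z2 where "Z2 = Z - Z1"
    have closed: "inc e \<subseteq> R" if "e \<in> Z" "x \<in> inc e" "x \<in> R" for e x
    proof
      fix y assume "y \<in> inc e"
      then have "(x, y) \<in> adj inc Z" using adj_edge that by metis
      then show "y \<in> R" using that(3) unfolding R_def by (auto intro: rtrancl_into_rtrancl)
    qed
    have Z2dis: "inc e \<inter> R = {}" if "e \<in> Z2" for e
      using closed that unfolding Z2_def Z1_def by blast
    obtain eu where eu: "eu \<in> Z" "u \<in> inc eu" using uw(1) by (auto simp: verts_def)
    have "u \<in> R" unfolding R_def by simp
    then have "eu \<in> Z1" using closed eu unfolding Z1_def by blast
    then have Z1ne: "Z1 \<noteq> {}" by blast
    obtain ew where ew: "ew \<in> Z" "w \<in> inc ew" using uw(2) by (auto simp: verts_def)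
    have "w \<notin> R" using uw(3) unfolding R_def by simp
    then have "ew \<in> Z2" using ew unfolding Z2_def Z1_def by blast
    then have Z2ne: "Z2 \<noteq> {}" by blast
    have Z1s: "Z1 \<subseteq> Z" "Z2 \<subseteq> Z" unfolding Z1_def Z2_def by auto
    have V1: "verts inc Z1 \<subseteq> R" unfolding Z1_def verts_def by blast
    have V2: "verts inc Z2 \<inter> R = {}" using Z2dis unfolding verts_def by blast
    have ZU: "Z = Z1 \<union> Z2" "Z1 \<inter> Z2 = {}" unfolding Z2_def using Z1s by auto
    have VU: "verts inc Z = verts inc Z1 \<union> verts inc Z2" using ZU(1) by simp
    have VD: "verts inc Z1 \<inter> verts inc Z2 = {}" using V1 V2 by blast
    have fin1: "finite Z1" "finite Z2" using Z1s finZ finite_subset by auto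
    have finv: "finite (verts inc Z1)" "finite (verts inc Z2)" using VU fVZ by auto
    have "card Z = card Z1 + card Z2" using ZU fin1 card_Un_disjoint by metis
    moreover have "card (verts inc Z) = card (verts inc Z1) + card (verts inc Z2)"
      using VU VD finv card_Un_disjoint by metis
    ultimately have "fv inc Z = fv inc Z1 + fv inc Z2" unfolding fv_def by simp
    then have "fv inc Z1 \<ge> 0 \<or> fv inc Z2 \<ge> 0" using f0 by linarith
    then have "Z1 = Z \<or> Z2 = Z" using minZ'[of Z1] minZ'[of Z2] Z1s Z1ne Z2ne by blast
    then show False using ZU Z1ne Z2ne by blast
  qed
  have "is_cycle inc Z" unfolding is_cycle_def connected_edges_def
    using conn deq PZ by blast
  then show ?thesis using PZ by blast
qed



lemma edge_in_comp:
  assumes "e \<in> E" "x \<in> inc e"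
  shows "inc e \<subseteq> (adj inc E)\<^sup>* `` {x}"
  using assms adj_edge[of e E x inc] by blast

lemma comp_reach:
  assumes "(v, a) \<in> (adj inc E)\<^sup>*"
  shows "(v, a) \<in> (adj inc {e\<in>E. inc e \<subseteq> (adj inc E)\<^sup>* `` {v}})\<^sup>*"
  using assms
proof (induction rule: rtrancl_induct)
  case base
  then show ?case by simp
next
  case (step y z)
  then obtain e where e: "e \<in> E" "y \<in> inc e" "z \<in> inc e" by (auto simp: adj_def)
  have "inc e \<subseteq> (adj inc E)\<^sup>* `` {v}"
  proof
    fix t assume "t \<in> inc e"
    then have "(y, t) \<in> adj inc E" using adj_edge e by metis
    then show "t \<in> (adj inc E)\<^sup>* `` {v}" using step.hyps(1) by (auto intro: rtrancl_into_rtrancl)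
  qed
  then have "(y, z) \<in> adj inc {e\<in>E. inc e \<subseteq> (adj inc E)\<^sup>* `` {v}}"
    using e by (auto simp: adj_def)
  then show ?case by (rule rtrancl_into_rtrancl[OF step.IH])
qed

lemma comps:
  assumes g: "graph E inc"
  shows "finite (components E inc)"
    "\<And>X. X \<in> components E inc \<Longrightarrow> X \<subseteq> E"
    "\<And>X. X \<in> components E inc \<Longrightarrow> X \<noteq> {}"
    "\<And>X. X \<in> components E inc \<Longrightarrow> connected_edges inc X"
    "\<And>X Y. X \<in> components E inc \<Longrightarrow> Y \<in> components E inc \<Longrightarrow> X \<noteq> Y \<Longrightarrow>
        verts inc X \<inter> verts inc Y = {}"
    "\<Union> (components E inc) = E"
proof -
  define R where "R = (adj inc E)\<^sup>*"
  define K where "K = (\<lambda>v. {e\<in>E. inc e \<subseteq> R `` {v}})"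
  have P: "components E inc = K ` verts inc E" unfolding components_def K_def R_def by simp
  show "finite (components E inc)" using P verts_finite[OF g] by simp
  show "\<And>X. X \<in> components E inc \<Longrightarrow> X \<subseteq> E" unfolding P K_def by auto
  have Kne: "K v \<noteq> {}" if vv: "v \<in> verts inc E" for v
  proof -
    obtain e where "e \<in> E" "v \<in> inc e" using vv unfolding verts_def by blast
    then have "e \<in> K v" unfolding K_def R_def using edge_in_comp[of e E v inc] by blast
    then show ?thesis by blast
  qed
  show "\<And>X. X \<in> components E inc \<Longrightarrow> X \<noteq> {}" unfolding P using Kne by blast
  have VK: "verts inc (K v) \<subseteq> R `` {v}" for v unfolding K_def verts_def by blast
  show "\<And>X. X \<in> components E inc \<Longrightarrow> connected_edges inc X"
  proof -
    fix X assume "X \<in> components E inc"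
    then obtain v where v: "v \<in> verts inc E" "X = K v" unfolding P by blast
    have "(a, b) \<in> (adj inc X)\<^sup>*" if "a \<in> verts inc X" "b \<in> verts inc X" for a b
    proof -
      have "(v, a) \<in> R" "(v, b) \<in> R" using that VK v(2) by blast+
      then have va: "(v, a) \<in> (adj inc X)\<^sup>*" and vb: "(v, b) \<in> (adj inc X)\<^sup>*"
        using comp_reach[of v _ inc E] v(2) unfolding K_def R_def by simp_all
      show ?thesis using rtrancl_trans[OF adj_rtrancl_sym[OF va] vb] .
    qed
    then show "connected_edges inc X" unfolding connected_edges_def using Kne v by blast
  qed
  show "\<And>X Y. X \<in> components E inc \<Longrightarrow> Y \<in> components E inc \<Longrightarrow> X \<noteq> Y \<Longrightarrow>
        verts inc X \<inter> verts inc Y = {}"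
  proof (rule ccontr)
    fix X Y assume XY: "X \<in> components E inc" "Y \<in> components E inc" "X \<noteq> Y"
      and ne: "verts inc X \<inter> verts inc Y \<noteq> {}"
    obtain v where v: "X = K v" using XY(1) unfolding P by blast
    obtain w where w: "Y = K w" using XY(2) unfolding P by blast
    obtain t where t: "(v, t) \<in> R" "(w, t) \<in> R" using ne VK v w by blast
    have vw: "(v, w) \<in> R" using rtrancl_trans[OF t(1)[unfolded R_def] adj_rtrancl_sym[OF t(2)[unfolded R_def]]] unfolding R_def .
    have wv: "(w, v) \<in> R" using adj_rtrancl_sym[OF vw[unfolded R_def]] unfolding R_def .
    have "R `` {v} = R `` {w}"
    proof
      show "R `` {v} \<subseteq> R `` {w}" using rtrancl_trans[of w v "adj inc E"] wv unfolding R_def by blast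
      show "R `` {w} \<subseteq> R `` {v}" using rtrancl_trans[of v w "adj inc E"] vw unfolding R_def by blast
    qed
    then have "X = Y" unfolding v w K_def by simp
    then show False using XY(3) by blast
  qed
  show "\<Union> (components E inc) = E"
  proof
    show "\<Union> (components E inc) \<subseteq> E" unfolding P K_def by auto
    show "E \<subseteq> \<Union> (components E inc)"
    proof
      fix e assume e: "e \<in> E"
      obtain x where x: "x \<in> inc e" using graph_inc(2)[OF g e] by blast
      then have "x \<in> verts inc E" using e by (auto simp: verts_def)
      moreover have "e \<in> K x" unfolding K_def R_def using edge_in_comp[of e E x inc] e x by blast
      ultimately show "e \<in> \<Union> (components E inc)" unfolding P by blast
    qed
  qed
qed

lemma fv_decomp:
  assumes g: "graph E inc" and P: "finite P" "\<And>X. X \<in> P \<Longrightarrow> X \<subseteq> E"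
  and disj: "\<And>X Y. X \<in> P \<Longrightarrow> Y \<in> P \<Longrightarrow> X \<noteq> Y \<Longrightarrow> verts inc X \<inter> verts inc Y = {}"
  and C: "C \<subseteq> \<Union>P"
  shows "fv inc C = (\<Sum>X\<in>P. fv inc (C \<inter> X))"
proof -
  have finE: "finite E" using graph_fin[OF g] .
  have edis: "X \<inter> Y = {}" if "X \<in> P" "Y \<in> P" "X \<noteq> Y" for X Y
  proof (rule ccontr)
    assume "X \<inter> Y \<noteq> {}"
    then obtain e where e: "e \<in> X" "e \<in> Y" by blast
    then have "e \<in> E" using P(2) that by blast
    then obtain x where "x \<in> inc e" using graph_inc(2)[OF g] by blast
    then have "x \<in> verts inc X \<inter> verts inc Y" using e by (auto simp: verts_def)
    then show False using disj[OF that] by blast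
  qed
  have C1: "C = (\<Union>X\<in>P. C \<inter> X)" using C by blast
  have fCX: "finite (C \<inter> X)" if "X \<in> P" for X using finite_subset[OF _ finE] P(2)[OF that] by blast
  have "card (\<Union>X\<in>P. C \<inter> X) = (\<Sum>X\<in>P. card (C \<inter> X))"
    by (rule card_UN_disjoint) (use P(1) fCX edis in blast)+
  then have cC: "card C = (\<Sum>X\<in>P. card (C \<inter> X))" using C1 by simp
  have V1: "verts inc C = (\<Union>X\<in>P. verts inc (C \<inter> X))" using C unfolding verts_def by blast
  have gCX: "graph (C \<inter> X) inc" if "X \<in> P" for X using graph_sub[OF g] P(2)[OF that] by blast
  have "card (\<Union>X\<in>P. verts inc (C \<inter> X)) = (\<Sum>X\<in>P. card (verts inc (C \<inter> X)))"
  proof (rule card_UN_disjoint)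
    show "finite P" using P(1) .
    show "\<forall>X\<in>P. finite (verts inc (C \<inter> X))" using verts_finite gCX by blast
    show "\<forall>X\<in>P. \<forall>Y\<in>P. X \<noteq> Y \<longrightarrow> verts inc (C \<inter> X) \<inter> verts inc (C \<inter> Y) = {}"
    proof (intro ballI impI)
      fix X Y assume "X \<in> P" "Y \<in> P" "X \<noteq> Y"
      moreover have "verts inc (C \<inter> X) \<subseteq> verts inc X" "verts inc (C \<inter> Y) \<subseteq> verts inc Y"
        using verts_mono[of "C \<inter> X" X inc] verts_mono[of "C \<inter> Y" Y inc] by blast+
      ultimately show "verts inc (C \<inter> X) \<inter> verts inc (C \<inter> Y) = {}" using disj by blast
    qed
  qed
  then have cV: "card (verts inc C) = (\<Sum>X\<in>P. card (verts inc (C \<inter> X)))" using V1 by simp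
  show ?thesis unfolding fv_def cC cV by (simp add: of_nat_sum sum_subtractf)
qed



lemma circ_iff:
  assumes g: "graph E inc"
  shows "(\<exists>C. kc_circuit k E inc C) \<longleftrightarrow> (\<exists>C\<subseteq>E. C \<noteq> {} \<and> fv inc C = int k)"
proof -
  have fam: "C \<in> kc_family k E inc \<longleftrightarrow> C \<subseteq> E \<and> C \<noteq> {} \<and> fv inc C = int k" for C
    unfolding kc_family_def fv_def by auto
  show ?thesis
  proof
    assume "\<exists>C. kc_circuit k E inc C"
    then show "\<exists>C\<subseteq>E. C \<noteq> {} \<and> fv inc C = int k" unfolding kc_circuit_def fam by blast
  next
    assume "\<exists>C\<subseteq>E. C \<noteq> {} \<and> fv inc C = int k"
    then obtain C0 where "C0 \<in> kc_family k E inc" using fam by blast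
    then obtain C where C: "C \<in> kc_family k E inc"
      and min: "\<And>D. D \<in> kc_family k E inc \<Longrightarrow> card C \<le> card D"
      using ex_has_least_nat[of "\<lambda>C. C \<in> kc_family k E inc" C0 card] by blast
    have finC: "finite C" using C graph_fin[OF g] finite_subset unfolding kc_family_def by blast
    have "kc_circuit k E inc C" unfolding kc_circuit_def
    proof (intro conjI ballI impI)
      show "C \<in> kc_family k E inc" using C .
      fix D assume "D \<in> kc_family k E inc" "D \<subseteq> C"
      then show "D = C" using card_seteq[OF finC] min by blast
    qed
    then show "\<exists>C. kc_circuit k E inc C" by blast
  qed
qed

lemma triv_iff:
  assumes g: "graph E inc" and k: "k \<ge> 1"
  shows "(\<exists>C. kc_circuit k E inc C) \<longleftrightarrow> \<not> kc_trivial k E inc"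
proof
  assume "\<exists>C. kc_circuit k E inc C"
  then obtain C where C: "kc_circuit k E inc C" by blast
  then have CE: "C \<subseteq> E" "C \<noteq> {}" unfolding kc_circuit_def kc_family_def by auto
  have nb: "\<not> kc_base k E inc E" using C CE unfolding kc_base_def kc_indep_def by blast
  have nc: "\<not> kc_cobase k E inc E"
  proof
    assume "kc_cobase k E inc E"
    then obtain B where B: "kc_base k E inc B" "E = E - B" unfolding kc_cobase_def by blast
    then have "B \<subseteq> E" unfolding kc_base_def kc_indep_def by blast
    then have B0: "B = {}" using B(2) by blast
    obtain e where e: "e \<in> E" using CE by blast
    have "kc_indep k E inc {e}"
      unfolding kc_indep_def
    proof (intro conjI notI)
      show "{e} \<subseteq> E" using e by blast
      assume "\<exists>D. kc_circuit k E inc D \<and> D \<subseteq> {e}"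
      then obtain D where D: "kc_circuit k E inc D" "D \<subseteq> {e}" by blast
      then have "D = {e}" unfolding kc_circuit_def kc_family_def by blast
      then have "card {e} = card (inc e) + k" using D unfolding kc_circuit_def kc_family_def by (simp add: verts_def)
      moreover have "card (inc e) \<ge> 1" using graph_inc(4)[OF g e] .
      ultimately show False using k by simp
    qed
    then have "{e} = B" using B(1) B0 unfolding kc_base_def by blast
    then show False using B0 by blast
  qed
  show "\<not> kc_trivial k E inc" unfolding kc_trivial_def using nb nc by blast
next
  assume nt: "\<not> kc_trivial k E inc"
  show "\<exists>C. kc_circuit k E inc C"
  proof (rule ccontr)
    assume "\<not> ?thesis"
    then have "kc_base k E inc E" unfolding kc_base_def kc_indep_def by blast
    then show False using nt unfolding kc_trivial_def by blast
  qed
qed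



theorem mainTheorem10:
  fixes E :: "'e set" and inc :: "'e \<Rightarrow> 'v set" and k :: nat
  assumes "graph E inc" and "k \<ge> 1"
  shows "((\<exists>C. kc_circuit k E inc C) \<longleftrightarrow>
            int k \<le> Delta E inc + int (card (tree_components E inc)))
       \<and> ((\<exists>C. kc_circuit k E inc C) \<longleftrightarrow> \<not> kc_trivial k E inc)"
proof -
  note g = assms(1)
  define P where "P = components E inc"
  have Pfin: "finite P" and PE: "\<And>X. X \<in> P \<Longrightarrow> X \<subseteq> E"
    and Pne: "\<And>X. X \<in> P \<Longrightarrow> X \<noteq> {}" and Pconn: "\<And>X. X \<in> P \<Longrightarrow> connected_edges inc X"
    and Pdis: "\<And>X Y. X \<in> P \<Longrightarrow> Y \<in> P \<Longrightarrow> X \<noteq> Y \<Longrightarrow> verts inc X \<inter> verts inc Y = {}"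
    and PU: "\<Union>P = E"
    using comps[OF g] unfolding P_def by auto
  have gX: "graph X inc" if "X \<in> P" for X using graph_sub[OF g PE[OF that]] .
  have edis: "X \<inter> Y = {}" if "X \<in> P" "Y \<in> P" "X \<noteq> Y" for X Y
  proof (rule ccontr)
    assume "X \<inter> Y \<noteq> {}"
    then obtain e where e: "e \<in> X" "e \<in> Y" by blast
    then have "e \<in> E" using PE that by blast
    then obtain x where "x \<in> inc e" using graph_inc(2)[OF g] by blast
    then have "x \<in> verts inc X \<inter> verts inc Y" using e by (auto simp: verts_def)
    then show False using Pdis[OF that] by blast
  qed
  have decomp: "fv inc C = (\<Sum>X\<in>P. fv inc (C \<inter> X))" if "C \<subseteq> E" for C
    using fv_decomp[OF g Pfin PE Pdis] that PU by blast
  have fvE: "Delta E inc = (\<Sum>X\<in>P. fv inc X)"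
  proof -
    have "Delta E inc = fv inc E" unfolding Delta_def fv_def by simp
    also have "\<dots> = (\<Sum>X\<in>P. fv inc (E \<inter> X))" using decomp by blast
    also have "\<dots> = (\<Sum>X\<in>P. fv inc X)"
      by (rule sum.cong[OF refl]) (use PE in \<open>simp add: Int_absorb1\<close>)
    finally show ?thesis .
  qed
  have grow': "fv inc C \<le> fv inc X" if "X \<in> P" "C \<subseteq> X" "C \<noteq> {}" for X C
    using grow[OF gX[OF that(1)] Pconn[OF that(1)] that(2) that(3)] unfolding fv_def by linarith
  have lb: "fv inc X \<ge> -1" if X: "X \<in> P" for X
  proof -
    obtain e where e: "e \<in> X" using Pne[OF X] by blast
    have "fv inc {e} \<le> fv inc X" using grow'[OF X] e by blast
    moreover have "card (inc e) \<le> 2" using graph_inc(3)[OF gX[OF X] e] .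
    ultimately show ?thesis unfolding fv_def by simp
  qed
  have tree_iff: "is_tree inc X \<longleftrightarrow> fv inc X < 0" if X: "X \<in> P" for X
  proof
    assume t: "is_tree inc X"
    show "fv inc X < 0"
    proof (rule ccontr)
      assume "\<not> fv inc X < 0"
      then obtain Z where "Z \<subseteq> X" "is_cycle inc Z" using cycle_exists[OF gX[OF X] Pne[OF X]] by force
      then show False using t unfolding is_tree_def by blast
    qed
  next
    assume f: "fv inc X < 0"
    show "is_tree inc X" unfolding is_tree_def
    proof (intro conjI notI)
      show "connected_edges inc X" using Pconn[OF X] .
      assume "\<exists>Y. Y \<subseteq> X \<and> is_cycle inc Y"
      then obtain Y where Y: "Y \<subseteq> X" "is_cycle inc Y" by blast
      have "Y \<noteq> {}" using Y(2) unfolding is_cycle_def connected_edges_def by blast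
      then have "fv inc Y \<le> fv inc X" using grow'[OF X Y(1)] by blast
      moreover have "fv inc Y = 0" using cycle_fv[OF graph_sub[OF gX[OF X] Y(1)] Y(2)] .
      ultimately show False using f by linarith
    qed
  qed
  define M where "M = (\<Sum>X\<in>P. max (fv inc X) 0)"
  have TP: "tree_components E inc = {X\<in>P. is_tree inc X}"
    unfolding tree_components_def P_def by simp
  have DM: "Delta E inc + int (card (tree_components E inc)) = M"
  proof -
    have "int (card (tree_components E inc)) = (\<Sum>X\<in>P. if is_tree inc X then 1 else 0)"
      unfolding TP using Pfin by (simp add: sum.inter_filter[symmetric])
    then have "Delta E inc + int (card (tree_components E inc))
        = (\<Sum>X\<in>P. fv inc X + (if is_tree inc X then 1 else 0))"
      using fvE by (simp add: sum.distrib)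
    also have "\<dots> = M" unfolding M_def
    proof (rule sum.cong[OF refl])
      fix X assume X: "X \<in> P"
      show "fv inc X + (if is_tree inc X then 1 else 0) = max (fv inc X) 0"
        using tree_iff[OF X] lb[OF X] by auto
    qed
    finally show ?thesis .
  qed
  have key: "(\<exists>C\<subseteq>E. C \<noteq> {} \<and> fv inc C = int k) \<longleftrightarrow> int k \<le> M"
  proof
    assume "\<exists>C\<subseteq>E. C \<noteq> {} \<and> fv inc C = int k"
    then obtain C where C: "C \<subseteq> E" "fv inc C = int k" by blast
    have "fv inc C = (\<Sum>X\<in>P. fv inc (C \<inter> X))" using decomp[OF C(1)] .
    also have "\<dots> \<le> M" unfolding M_def
    proof (rule sum_mono)
      fix X assume X: "X \<in> P"
      show "fv inc (C \<inter> X) \<le> max (fv inc X) 0"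
      proof (cases "C \<inter> X = {}")
        case True
        then show ?thesis by (simp add: fv_def)
      next
        case False
        then show ?thesis using grow'[OF X, of "C \<inter> X"] by simp
      qed
    qed
    finally show "int k \<le> M" using C(2) by simp
  next
    assume kM: "int k \<le> M"
    define C0 where "C0 = \<Union>{X\<in>P. fv inc X \<ge> 0}"
    have C0E: "C0 \<subseteq> E" unfolding C0_def using PE by blast
    have CX: "C0 \<inter> X = (if fv inc X \<ge> 0 then X else {})" if X: "X \<in> P" for X
    proof (cases "fv inc X \<ge> 0")
      case True
      then show ?thesis unfolding C0_def using X by auto
    next
      case False
      have "C0 \<inter> X = {}" unfolding C0_def using edis X False by blast
      then show ?thesis using False by simp
    qed
    have "fv inc C0 = (\<Sum>X\<in>P. fv inc (C0 \<inter> X))" using decomp[OF C0E] .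
    also have "\<dots> = M" unfolding M_def
    proof (rule sum.cong[OF refl])
      fix X assume X: "X \<in> P"
      show "fv inc (C0 \<inter> X) = max (fv inc X) 0"
        using CX[OF X] by (simp add: fv_def)
    qed
    finally have "int k \<le> fv inc C0" using kM by simp
    then obtain D where "D \<subseteq> C0" "D \<noteq> {}" "fv inc D = int k"
      using exists_exact[OF graph_sub[OF g C0E] _ assms(2)] by blast
    then show "\<exists>C\<subseteq>E. C \<noteq> {} \<and> fv inc C = int k" using C0E by blast
  qed
  show ?thesis using circ_iff[OF g, of k] key DM triv_iff[OF g assms(2)] by simp
qed

end
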